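(* Let $n$, $k$ and $r$ be integers such that $1<r<k<n$. Then \[ \lfloor (rn-1)/k\rfloor-1 \leq \sigma(n,k,r)\leq \lfloor (rn-1)/k\rfloor, \] where $\sigma(n,k,r)$ denotes the largest integer $s\in[0,n]$ such that there exists an $(s,k,r)$-clash-free permutation of $\mathbb{Z}_n$.
   Context: For integers $u\leq v$, $[u,v]$ denotes the set of integers $i$ with $u\leq i\leq v$. For a subset $X\subseteq\mathbb{Z}_n$, define $||X||_n=\min\{t\in\mathbb{Z}\mid X\subseteq x+[0,t]\bmod n \text{ for some } x\in\mathbb{Z}_n\}$ (the minimum length of a cyclic interval containing $X$). For a permutation $\pi$ of $\mathbb{Z}_n$ and positive integers $s,k,r$, an $(s,k,r)$-clash is a subset $X\subseteq\mathbb{Z}_n$ of cardinality $r+1$ such that $||X||_n<s$ and $||\pi(X)||_n<k$. The permutation $\pi$ is $(s,k,r)$-clash-free if it has no $(s,k,r)$-clashes. *)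

theory Defs
  imports Complex_Main
begin

text \<open>Z_n is modelled as {..<n} with arithmetic mod n.
  The cyclic width ||X||_n: least t such that X is contained in a cyclic
  interval x + [0,t] mod n for some x in Z_n.\<close>
definition cyc_width :: "nat \<Rightarrow> nat set \<Rightarrow> nat" where
  "cyc_width n X = (LEAST t. \<exists>x<n. X \<subseteq> {(x + i) mod n | i. i \<le> t})"

definition is_clash :: "nat \<Rightarrow> (nat \<Rightarrow> nat) \<Rightarrow> nat \<Rightarrow> nat \<Rightarrow> nat \<Rightarrow> nat set \<Rightarrow> bool" where
  "is_clash n \<pi> s k r X \<longleftrightarrow>
     X \<subseteq> {..<n} \<and> card X = r + 1 \<and> cyc_width n X < s \<and> cyc_width n (\<pi> ` X) < k"

definition clash_free :: "nat \<Rightarrow> (nat \<Rightarrow> nat) \<Rightarrow> nat \<Rightarrow> nat \<Rightarrow> nat \<Rightarrow> bool" where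
  "clash_free n \<pi> s k r \<longleftrightarrow> \<not> (\<exists>X. is_clash n \<pi> s k r X)"

definition sigma :: "nat \<Rightarrow> nat \<Rightarrow> nat \<Rightarrow> nat" where
  "sigma n k r = (GREATEST s. s \<le> n \<and> (\<exists>\<pi>. bij_betw \<pi> {..<n} {..<n} \<and> clash_free n \<pi> s k r))"

end

theory Submission
  imports Defs "HOL-Number_Theory.Cong"
begin

lemma shift_inj: "inj_on (\<lambda>i. (x + i) mod n) {..<(n::nat)}"
proof (rule inj_onI)
  fix i j assume i: "i \<in> {..<n}" and j: "j \<in> {..<n}" and e: "(x + i) mod n = (x + j) mod n"
  have "[x + i = x + j] (mod n)" using e by (simp add: cong_def)
  then have "[i = j] (mod n)" by (simp add: cong_add_lcancel_nat)
  then show "i = j" using i j cong_less_modulus_unique_nat by auto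
qed

lemma shift_surj: "(\<lambda>i. (x + i) mod n) ` {..<(n::nat)} = {..<n}"
proof (cases "n = 0")
  case True then show ?thesis by simp
next
  case False
  show ?thesis
    by (rule endo_inj_surj) (use False shift_inj in auto)
qed

lemma cw_le:
  assumes "x < n" "X \<subseteq> {(x + i) mod n | i. i \<le> t}"
  shows "cyc_width n X \<le> t"
  unfolding cyc_width_def by (rule Least_le) (use assms in blast)

lemma cw_ex:
  assumes "0 < n" "X \<subseteq> {..<n}"
  shows "\<exists>x<n. X \<subseteq> {(x + i) mod n | i. i \<le> cyc_width n X}"
  unfolding cyc_width_def
proof (rule LeastI[of _ "n - 1"])
  show "\<exists>x<n. X \<subseteq> {(x + i) mod n | i. i \<le> n - 1}"
  proof (intro exI conjI)
    show "0 < n" by fact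
    show "X \<subseteq> {(0 + i) mod n | i. i \<le> n - 1}"
    proof
      fix a assume "a \<in> X"
      then have "a < n" using assms by auto
      then show "a \<in> {(0 + i) mod n | i. i \<le> n - 1}" by (auto intro!: exI[of _ a])
    qed
  qed
qed

lemma card_filter_sum: "card {i\<in>{..<s}. P i} = (\<Sum>i<(s::nat). if P i then 1 else (0::nat))"
  by (simp add: sum.If_cases Int_def lessThan_def)

lemma sum_cnt:
  assumes "Q \<subseteq> {..<(n::nat)}"
  shows "(\<Sum>x<n. \<Sum>i<s. if (x + i) mod n \<in> Q then 1 else (0::nat)) = s * card Q"
proof -
  have inner: "(\<Sum>x<n. if (x + i) mod n \<in> Q then 1 else (0::nat)) = card Q" for i
  proof -
    have "(\<Sum>x<n. if (x + i) mod n \<in> Q then 1 else (0::nat)) = card {x\<in>{..<n}. (x + i) mod n \<in> Q}"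
      by (rule card_filter_sum[symmetric])
    also have "\<dots> = card ((\<lambda>x. (i + x) mod n) ` {x\<in>{..<n}. (x + i) mod n \<in> Q})"
      by (rule card_image[symmetric]) (rule inj_on_subset[OF shift_inj], auto)
    also have "(\<lambda>x. (i + x) mod n) ` {x\<in>{..<n}. (x + i) mod n \<in> Q} = Q"
    proof
      show "(\<lambda>x. (i + x) mod n) ` {x\<in>{..<n}. (x + i) mod n \<in> Q} \<subseteq> Q"
        by (auto simp: add.commute)
      show "Q \<subseteq> (\<lambda>x. (i + x) mod n) ` {x\<in>{..<n}. (x + i) mod n \<in> Q}"
      proof
        fix b assume b: "b \<in> Q"
        then have "b \<in> (\<lambda>x. (i + x) mod n) ` {..<n}" using assms shift_surj[of i n] by auto
        then obtain x where "x < n" "b = (i + x) mod n" by auto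
        then show "b \<in> (\<lambda>x. (i + x) mod n) ` {x\<in>{..<n}. (x + i) mod n \<in> Q}"
          using b by (auto simp: add.commute)
      qed
    qed
    finally show ?thesis .
  qed
  have "(\<Sum>x<n. \<Sum>i<s. if (x + i) mod n \<in> Q then 1 else (0::nat))
      = (\<Sum>i<s. \<Sum>x<n. if (x + i) mod n \<in> Q then 1 else (0::nat))"
    by (rule sum.swap)
  also have "\<dots> = (\<Sum>i<s. card Q)" by (rule sum.cong[OF refl]) (rule inner)
  also have "\<dots> = s * card Q" by simp
  finally show ?thesis .
qed

lemma card_preim:
  assumes "bij_betw \<pi> {..<n} {..<(n::nat)}" "L \<subseteq> {..<n}"
  shows "card {a\<in>{..<n}. \<pi> a \<in> L} = card L"
proof -
  have "\<pi> ` {a\<in>{..<n}. \<pi> a \<in> L} = L"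
  proof
    show "\<pi> ` {a\<in>{..<n}. \<pi> a \<in> L} \<subseteq> L" by auto
    show "L \<subseteq> \<pi> ` {a\<in>{..<n}. \<pi> a \<in> L}"
    proof
      fix b assume "b \<in> L"
      then have "b \<in> \<pi> ` {..<n}" using assms bij_betw_imp_surj_on by blast
      then show "b \<in> \<pi> ` {a\<in>{..<n}. \<pi> a \<in> L}" using \<open>b \<in> L\<close> by auto
    qed
  qed
  moreover have "inj_on \<pi> {..<n}" using assms(1) by (rule bij_betw_imp_inj_on)
  then have "inj_on \<pi> {a\<in>{..<n}. \<pi> a \<in> L}" by (rule inj_on_subset) auto
  ultimately show ?thesis by (metis card_image)
qed

lemma no_big:
  assumes cf: "clash_free n \<pi> s k r" and sn: "s \<le> n" and x: "x < n" and y: "y < n" and k: "0 < k"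
    and Q: "\<And>a. a \<in> Q \<Longrightarrow> a < n \<and> (\<exists>j<k. \<pi> a = (y + j) mod n)"
  shows "card {i\<in>{..<s}. (x + i) mod n \<in> Q} \<le> r"
proof (rule ccontr)
  assume "\<not> ?thesis"
  then have "r + 1 \<le> card {i\<in>{..<s}. (x + i) mod n \<in> Q}" by simp
  then obtain I where I: "I \<subseteq> {i\<in>{..<s}. (x + i) mod n \<in> Q}" "card I = r + 1" "finite I"
    by (rule obtain_subset_with_card_n)
  define X where "X = (\<lambda>i. (x + i) mod n) ` I"
  have injI: "inj_on (\<lambda>i. (x + i) mod n) I"
    by (rule inj_on_subset[OF shift_inj]) (use I sn in auto)
  have cX: "card X = r + 1" unfolding X_def using card_image[OF injI] I by simp
  have s0: "0 < s" using I by (cases "I = {}") auto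
  have Xn: "X \<subseteq> {..<n}" unfolding X_def using x by auto
  have "X \<subseteq> {(x + i) mod n | i. i \<le> s - 1}"
  proof
    fix b assume "b \<in> X"
    then obtain i where "i \<in> I" "b = (x + i) mod n" unfolding X_def by auto
    moreover then have "i \<le> s - 1" using I by auto
    ultimately show "b \<in> {(x + i) mod n | i. i \<le> s - 1}" by blast
  qed
  then have "cyc_width n X \<le> s - 1" by (rule cw_le[OF x])
  then have w1: "cyc_width n X < s" using s0 by simp
  have "\<pi> ` X \<subseteq> {(y + j) mod n | j. j \<le> k - 1}"
  proof
    fix b assume "b \<in> \<pi> ` X"
    then obtain i where "i \<in> I" "b = \<pi> ((x + i) mod n)" unfolding X_def by auto
    then have "(x + i) mod n \<in> Q" using I by auto
    then obtain j where "j < k" "\<pi> ((x + i) mod n) = (y + j) mod n" using Q by blast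
    moreover have "j \<le> k - 1" using \<open>j < k\<close> by simp
    ultimately show "b \<in> {(y + j) mod n | j. j \<le> k - 1}" using \<open>b = _\<close> by blast
  qed
  then have "cyc_width n (\<pi> ` X) \<le> k - 1" by (rule cw_le[OF y])
  then have w2: "cyc_width n (\<pi> ` X) < k" using k by simp
  have "is_clash n \<pi> s k r X" unfolding is_clash_def using Xn cX w1 w2 by simp
  then show False using cf unfolding clash_free_def by blast
qed

lemma upper:
  assumes r1: "1 < r" and rk: "r < k" and kn: "k < n" and bij: "bij_betw \<pi> {..<n} {..<n}"
    and cf: "clash_free n \<pi> s k r" and sn: "s \<le> n"
  shows "s * k < r * n"
proof (rule ccontr)
  assume "\<not> s * k < r * n"
  then have ge: "r * n \<le> s * k" by simp
  have n0: "0 < n" and k0: "0 < k" using r1 rk kn by auto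
  have s0: "0 < s" using ge r1 n0 by (cases "s = 0") auto
  define ind where "ind Q t = (if t mod n \<in> Q then 1 else (0::nat))" for Q t
  define cnt where "cnt Q x = (\<Sum>i<s. ind Q (x + i))" for Q x
  have per: "cnt Q x = cnt Q (x mod n)" for Q x
    unfolding cnt_def ind_def by (rule sum.cong[OF refl]) (simp add: mod_add_left_eq)
  have tel: "cnt Q (Suc x) + ind Q x = cnt Q x + ind Q (x + s)" for Q x
  proof -
    have "(\<Sum>i<Suc s. ind Q (x + i)) = ind Q (x + 0) + (\<Sum>i<s. ind Q (x + Suc i))"
      by (rule sum.lessThan_Suc_shift)
    moreover have "(\<Sum>i<Suc s. ind Q (x + i)) = (\<Sum>i<s. ind Q (x + i)) + ind Q (x + s)"
      by (rule sum.lessThan_Suc)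
    moreover have "(\<Sum>i<s. ind Q (x + Suc i)) = cnt Q (Suc x)"
      unfolding cnt_def by simp
    ultimately show ?thesis unfolding cnt_def by simp
  qed
  have cnt_card: "cnt Q x = card {i\<in>{..<s}. (x + i) mod n \<in> Q}" for Q x
    unfolding cnt_def ind_def by (rule card_filter_sum[symmetric])
  have sumQ: "(\<Sum>x<n. cnt Q x) = s * card Q" if "Q \<subseteq> {..<n}" for Q
    unfolding cnt_def ind_def using sum_cnt[OF that] by simp
  have boundQ: "cnt Q x \<le> r" if "x < n" "y < n" "\<And>a. a \<in> Q \<Longrightarrow> a < n \<and> (\<exists>j<k. \<pi> a = (y + j) mod n)" for Q x y
    unfolding cnt_card by (rule no_big[OF cf sn that(1) that(2) k0 that(3)])
  define P where "P = {a\<in>{..<n}. \<pi> a \<in> {..<k}}"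
  define P' where "P' = {a\<in>{..<n}. \<pi> a \<in> {1..k}}"
  have cP: "card P = k" unfolding P_def using card_preim[OF bij, of "{..<k}"] kn by simp
  have "{1..k} \<subseteq> {..<n}" using kn by auto
  then have cP': "card P' = k" unfolding P'_def using card_preim[OF bij, of "{1..k}"] by simp
  have P_sub: "P \<subseteq> {..<n}" "P' \<subseteq> {..<n}" unfolding P_def P'_def by auto
  have bP: "cnt P x \<le> r" if "x < n" for x
  proof (rule boundQ[OF that n0])
    fix a assume "a \<in> P"
    then have "a < n" "\<pi> a < k" unfolding P_def by auto
    moreover have "\<pi> a = (0 + \<pi> a) mod n" using \<open>\<pi> a < k\<close> kn by simp
    ultimately show "a < n \<and> (\<exists>j<k. \<pi> a = (0 + j) mod n)" by blast
  qed
  have bP': "cnt P' x \<le> r" if "x < n" for x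
  proof (rule boundQ[OF that])
    show "1 < n" using r1 rk kn by simp
    fix a assume "a \<in> P'"
    then have "a < n" "1 \<le> \<pi> a" "\<pi> a \<le> k" unfolding P'_def by auto
    moreover have "\<pi> a = (1 + (\<pi> a - 1)) mod n" using \<open>\<pi> a \<le> k\<close> \<open>1 \<le> \<pi> a\<close> kn by simp
    moreover have "\<pi> a - 1 < k" using \<open>\<pi> a \<le> k\<close> \<open>1 \<le> \<pi> a\<close> by simp
    ultimately show "a < n \<and> (\<exists>j<k. \<pi> a = (1 + j) mod n)" by blast
  qed
  have sk: "s * k = r * n"
  proof -
    have "(\<Sum>x<n. cnt P x) \<le> (\<Sum>x<n. r)" by (rule sum_mono) (use bP in auto)
    then have "s * k \<le> n * r" using sumQ[OF P_sub(1)] cP by simp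
    then show ?thesis using ge by (simp add: mult.commute)
  qed
  have sn': "s < n"
  proof (rule ccontr)
    assume "\<not> s < n"
    then have "s = n" using sn by simp
    then have "n * k = n * r" using sk by (simp add: mult.commute)
    then show False using n0 rk by simp
  qed
  have all_r: "cnt Q x = r" if Q: "Q \<subseteq> {..<n}" "card Q = k" and b: "\<And>x. x < n \<Longrightarrow> cnt Q x \<le> r" for Q x
  proof -
    have "cnt Q x' = r" if "x' < n" for x'
    proof (rule ccontr)
      assume "cnt Q x' \<noteq> r"
      then have "cnt Q x' < r" using b[OF that] by simp
      then have "(\<Sum>x<n. cnt Q x) < (\<Sum>x<n. r)"
        by (intro sum_strict_mono_ex1) (use b that in auto)
      then show False using sumQ[OF Q(1)] Q(2) sk by (simp add: mult.commute)
    qed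
    then show ?thesis using per[of Q x] n0 by simp
  qed
  have shiftQ: "ind Q x = ind Q (x + s)" if "Q \<subseteq> {..<n}" "card Q = k" "\<And>x. x < n \<Longrightarrow> cnt Q x \<le> r" for Q x
    using tel[of Q x] all_r[OF that, of x] all_r[OF that, of "Suc x"] by simp
  obtain a where a: "a < n" "\<pi> a = 0"
  proof -
    have "0 \<in> \<pi> ` {..<n}" using bij n0 bij_betw_imp_surj_on by fastforce
    then show ?thesis using that by auto
  qed
  have "ind P a = ind P (a + s)" by (rule shiftQ[OF P_sub(1) cP bP])
  moreover have "ind P a = 1" unfolding ind_def P_def using a k0 by simp
  ultimately have "ind P (a + s) = 1" by simp
  then have bin1: "(a + s) mod n \<in> P" unfolding ind_def by (simp split: if_splits)
  have "ind P' a = ind P' (a + s)" by (rule shiftQ[OF P_sub(2) cP' bP'])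
  moreover have "ind P' a = 0" unfolding ind_def P'_def using a by simp
  ultimately have "ind P' (a + s) = 0" by simp
  then have bin2: "(a + s) mod n \<notin> P'" unfolding ind_def by (simp split: if_splits)
  have "\<pi> ((a + s) mod n) < k" using bin1 unfolding P_def by simp
  moreover have "\<not> (1 \<le> \<pi> ((a + s) mod n) \<and> \<pi> ((a + s) mod n) \<le> k)"
    using bin2 n0 unfolding P'_def by simp
  ultimately have "\<pi> ((a + s) mod n) = \<pi> a" using a by simp
  then have "(a + s) mod n = a"
    using inj_onD[OF bij_betw_imp_inj_on[OF bij]] a n0 by simp
  moreover have "(a + s) mod n \<noteq> a"
  proof (cases "a + s < n")
    case True then show ?thesis using s0 by simp
  next
    case False
    then have "(a + s) mod n = (a + s - n) mod n" by (simp add: le_mod_geq)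
    also have "\<dots> = a + s - n" using a sn' by simp
    finally have "(a + s) mod n = a + s - n" .
    then show ?thesis using False sn' by linarith
  qed
  ultimately show False by simp
qed

lemma sigma_inj:
  fixes c n :: nat
  assumes n0: "0 < n"
  defines "G \<equiv> gcd c n" and "m \<equiv> n div gcd c n"
  shows "inj_on (\<lambda>j. (j * c + (G - 1 - j div m)) mod n) {..<n}"
proof (rule inj_onI)
  have G0: "0 < G" unfolding G_def using n0 by simp
  have Gn: "G dvd n" unfolding G_def by simp
  have nGm: "n = m * G" unfolding m_def G_def by simp
  have m0: "0 < m" using nGm n0 by (cases "m = 0") auto
  define c' where "c' = c div G"
  have cc: "c = c' * G" unfolding c'_def G_def by simp
  have cop: "coprime c' m"
    unfolding c'_def m_def G_def using n0 by (intro div_gcd_coprime) simp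
  have tl: "j div m < G" if "j < n" for j
    using that nGm by (intro less_mult_imp_div_less) (simp add: mult.commute)
  have modG: "((j * c + (G - 1 - j div m)) mod n) mod G = G - 1 - j div m" for j
  proof -
    have "((j * c + (G - 1 - j div m)) mod n) mod G = (j * c + (G - 1 - j div m)) mod G"
      by (rule mod_mod_cancel[OF Gn])
    also have "\<dots> = ((G - 1 - j div m) + (j * c') * G) mod G"
      using cc by (simp add: ac_simps)
    also have "\<dots> = (G - 1 - j div m) mod G"
      by simp
    also have "\<dots> = G - 1 - j div m" using G0 by simp
    finally show ?thesis .
  qed
  fix j1 j2 assume j1: "j1 \<in> {..<n}" and j2: "j2 \<in> {..<n}"
    and e: "(j1 * c + (G - 1 - j1 div m)) mod n = (j2 * c + (G - 1 - j2 div m)) mod n"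
  have "G - 1 - j1 div m = ((j1 * c + (G - 1 - j1 div m)) mod n) mod G" by (rule modG[symmetric])
  also have "\<dots> = ((j2 * c + (G - 1 - j2 div m)) mod n) mod G" by (simp only: e)
  also have "\<dots> = G - 1 - j2 div m" by (rule modG)
  finally have "G - 1 - j1 div m = G - 1 - j2 div m" .
  then have t: "j1 div m = j2 div m" using tl[of j1] tl[of j2] j1 j2 by simp
  define t0 where "t0 = j1 div m"
  have "[j1 * c + (G - 1 - t0) = j2 * c + (G - 1 - t0)] (mod n)"
    using e t unfolding cong_def t0_def by simp
  then have c1: "[j1 * c = j2 * c] (mod n)" by (simp add: cong_add_rcancel_nat)
  have dec: "j * c = t0 * c' * n + (j mod m) * c" if "j div m = t0" for j
  proof -
    have "j * c = (j div m * m + j mod m) * c" by simp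
    also have "\<dots> = t0 * c' * n + (j mod m) * c" using that nGm cc by (simp add: algebra_simps)
    finally show ?thesis .
  qed
  have "[t0 * c' * n + (j1 mod m) * c = t0 * c' * n + (j2 mod m) * c] (mod n)"
    using c1 dec[of j1] dec[of j2] t unfolding t0_def by simp
  then have "[(j1 mod m) * c = (j2 mod m) * c] (mod n)" by (simp add: cong_add_lcancel_nat)
  then have "((j1 mod m) * c') * G mod (m * G) = ((j2 mod m) * c') * G mod (m * G)"
    unfolding cong_def using cc nGm by (simp add: ac_simps)
  then have "((j1 mod m) * c' mod m) * G = ((j2 mod m) * c' mod m) * G"
    by (simp only: mod_mult_mult2)
  then have "[(j1 mod m) * c' = (j2 mod m) * c'] (mod m)" unfolding cong_def using G0 by simp
  then have "[j1 mod m = j2 mod m] (mod m)" using cong_mult_rcancel_nat[OF cop] by simp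
  then have w: "j1 mod m = j2 mod m" using m0 by (simp add: cong_def)
  show "j1 = j2" using t w by (metis div_mult_mod_eq)
qed

lemma lower:
  fixes n k r :: nat
  assumes r1: "1 < r" and rk: "r < k" and kn: "k < n"
  shows "\<exists>\<pi>. bij_betw \<pi> {..<n} {..<n} \<and> clash_free n \<pi> ((r * n - 1) div k - 1) k r"
proof -
  define c where "c = (r * n - 1) div k"
  define s0 where "s0 = c - 1"
  define G where "G = gcd c n"
  define m where "m = n div gcd c n"
  define D where "D j = G - 1 - j div m" for j
  define \<sigma> where "\<sigma> j = (j * c + D j) mod n" for j
  have n0: "0 < n" and k0: "0 < k" using r1 rk kn by auto
  have kc: "k * c \<le> r * n - 1" unfolding c_def by simp
  have "2 * n \<le> r * n" using r1 by (intro mult_le_mono1) simp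
  then have krn: "k \<le> r * n - 1" using kn by linarith
  have c1: "1 \<le> c"
  proof -
    have "k div k \<le> (r * n - 1) div k" using krn by (rule div_le_mono)
    then show ?thesis using k0 unfolding c_def by simp
  qed
  have "r * n < k * n" using rk n0 by simp
  then have "k * c < k * n" using kc by linarith
  then have cn: "c < n" by simp
  have G0: "0 < G" unfolding G_def using n0 by simp
  have Gn: "G dvd n" and Gc: "G dvd c" unfolding G_def by simp_all
  have nGm: "n = m * G" unfolding m_def G_def by simp
  have m0: "0 < m" using nGm n0 by (cases "m = 0") auto
  have GA: "k * c + G \<le> r * n"
  proof -
    have "G dvd r * n - k * c" using Gn Gc by (intro dvd_diff_nat) simp_all
    moreover have "0 < r * n - k * c" using kc krn k0 by linarith
    ultimately have "G \<le> r * n - k * c" by (rule dvd_imp_le)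
    then show ?thesis using kc by linarith
  qed
  have Dle: "D j \<le> G - 1" for j unfolding D_def by simp
  have tl: "j div m < G" if "j < n" for j
    using that nGm by (intro less_mult_imp_div_less) (simp add: mult.commute)
  have inj: "inj_on \<sigma> {..<n}"
    using sigma_inj[OF n0, of c] unfolding \<sigma>_def D_def G_def m_def by simp
  have img: "\<sigma> ` {..<n} = {..<n}"
    by (rule endo_inj_surj) (use inj n0 in \<open>auto simp: \<sigma>_def\<close>)
  have bij\<sigma>: "bij_betw \<sigma> {..<n} {..<n}" by (simp add: bij_betw_def inj img)
  define \<pi> where "\<pi> = the_inv_into {..<n} \<sigma>"
  have bij\<pi>: "bij_betw \<pi> {..<n} {..<n}" unfolding \<pi>_def by (rule bij_betw_the_inv_into[OF bij\<sigma>])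
  have \<sigma>\<pi>: "\<sigma> (\<pi> a) = a" if "a < n" for a
    unfolding \<pi>_def using f_the_inv_into_f_bij_betw[OF bij\<sigma>] that by simp
  define U where "U j = j * c + D (j mod n)" for j
  have Umod: "U j mod n = \<sigma> (j mod n)" for j
    unfolding U_def \<sigma>_def by (metis mod_add_left_eq mod_mult_left_eq)
  have Ustep: "U j + s0 \<le> U (Suc j)" for j
  proof (cases "Suc (j mod n) = n")
    case True
    then have "Suc j mod n = 0" by (simp add: mod_Suc)
    then have "D (Suc j mod n) = G - 1" unfolding D_def by simp
    then have "D (j mod n) \<le> D (Suc j mod n)" using Dle by simp
    then show ?thesis unfolding U_def s0_def using c1 by simp
  next
    case False
    then have e1: "Suc j mod n = Suc (j mod n)" by (simp add: mod_Suc)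
    have lt: "Suc (j mod n) < n" using False n0 mod_less_divisor[OF n0, of j] by linarith
    have "Suc (j mod n) div m \<le> Suc ((j mod n) div m)" by (simp add: div_Suc)
    moreover have "Suc (j mod n) div m < G" using tl[OF lt] .
    moreover have "(j mod n) div m < G" using tl n0 by simp
    ultimately have "D (j mod n) \<le> D (Suc j mod n) + 1" unfolding D_def e1 by linarith
    then show ?thesis unfolding U_def s0_def using c1 by simp
  qed
  have Umono: "U j + h * s0 \<le> U (j + h)" for j h
  proof (induction h)
    case 0 then show ?case by simp
  next
    case (Suc h)
    have "U (j + h) + s0 \<le> U (Suc (j + h))" by (rule Ustep)
    then show ?case using Suc by simp
  qed
  have Uup: "U (j + h) \<le> U j + h * c + (G - 1)" for j h
  proof -
    have "U (j + h) = j * c + h * c + D ((j + h) mod n)" unfolding U_def by (simp add: add_mult_distrib)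
    moreover have "D ((j + h) mod n) \<le> G - 1" by (rule Dle)
    moreover have "j * c \<le> U j" unfolding U_def by simp
    ultimately show ?thesis by linarith
  qed
  have s0n: "s0 < n" using cn unfolding s0_def by simp
  show ?thesis
  proof (intro exI conjI)
    show "bij_betw \<pi> {..<n} {..<n}" by (rule bij\<pi>)
    show "clash_free n \<pi> ((r * n - 1) div k - 1) k r"
      unfolding clash_free_def c_def[symmetric] s0_def[symmetric]
    proof
      assume "\<exists>X. is_clash n \<pi> s0 k r X"
      then obtain X where X: "X \<subseteq> {..<n}" "card X = r + 1" "cyc_width n X < s0" "cyc_width n (\<pi> ` X) < k"
        unfolding is_clash_def by blast
      obtain x0 where x0: "x0 < n" "X \<subseteq> {(x0 + i) mod n | i. i \<le> cyc_width n X}"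
        using cw_ex[OF n0 X(1)] by blast
      have \<pi>X: "\<pi> ` X \<subseteq> {..<n}" using bij\<pi> X(1) unfolding bij_betw_def by blast
      obtain y0 where y0: "y0 < n" "\<pi> ` X \<subseteq> {(y0 + i) mod n | i. i \<le> cyc_width n (\<pi> ` X)}"
        using cw_ex[OF n0 \<pi>X] by blast
      define I where "I = {i\<in>{..<k}. (y0 + i) mod n \<in> \<pi> ` X}"
      have imgI: "(\<lambda>i. (y0 + i) mod n) ` I = \<pi> ` X"
      proof
        show "(\<lambda>i. (y0 + i) mod n) ` I \<subseteq> \<pi> ` X" unfolding I_def by auto
        show "\<pi> ` X \<subseteq> (\<lambda>i. (y0 + i) mod n) ` I"
        proof
          fix b assume b: "b \<in> \<pi> ` X"
          then obtain i where "i \<le> cyc_width n (\<pi> ` X)" "b = (y0 + i) mod n" using y0 by blast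
          moreover then have "i < k" using X(4) by simp
          ultimately show "b \<in> (\<lambda>i. (y0 + i) mod n) ` I" unfolding I_def using b by blast
        qed
      qed
      have injI: "inj_on (\<lambda>i. (y0 + i) mod n) I"
        by (rule inj_on_subset[OF shift_inj]) (use kn in \<open>auto simp: I_def\<close>)
      have inj\<pi>X: "inj_on \<pi> X"
        using bij_betw_imp_inj_on[OF bij\<pi>] X(1) by (rule inj_on_subset)
      have cI: "card I = r + 1"
        using card_image[OF injI] imgI card_image[OF inj\<pi>X] X(2) by simp
      have finI: "finite I" unfolding I_def by simp
      have neI: "I \<noteq> {}" using cI by auto
      define Z where "Z i = U (y0 + i) + (n - x0)" for i
      have Zmod: "Z i mod n < s0" if iI: "i \<in> I" for i
      proof -
        have "(y0 + i) mod n \<in> \<pi> ` X" using iI unfolding I_def by simp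
        then obtain a where a: "a \<in> X" "(y0 + i) mod n = \<pi> a" by auto
        have an: "a < n" using a X(1) by auto
        have "U (y0 + i) mod n = a" using Umod[of "y0 + i"] a \<sigma>\<pi>[OF an] by simp
        moreover obtain p where p: "p \<le> cyc_width n X" "a = (x0 + p) mod n" using a(1) x0(2) by blast
        ultimately have "U (y0 + i) mod n = (x0 + p) mod n" by simp
        have pn: "p < s0" using p X(3) by simp
        have "Z i mod n = (U (y0 + i) mod n + (n - x0)) mod n" unfolding Z_def by (simp add: mod_add_left_eq)
        also have "\<dots> = ((x0 + p) mod n + (n - x0)) mod n" using \<open>U (y0 + i) mod n = (x0 + p) mod n\<close> by simp
        also have "\<dots> = (x0 + p + (n - x0)) mod n" by (simp add: mod_add_left_eq)
        also have "x0 + p + (n - x0) = p + n" using x0(1) by simp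
        also have "(p + n) mod n = p" using pn s0n by simp
        finally show ?thesis using pn by simp
      qed
      have Zmono: "Z i + (i' - i) * s0 \<le> Z i'" if "i \<le> i'" for i i'
        using Umono[of "y0 + i" "i' - i"] that unfolding Z_def by simp
      have Zup: "Z i' \<le> Z i + (i' - i) * c + (G - 1)" if "i \<le> i'" for i i'
        using Uup[of "y0 + i" "i' - i"] that unfolding Z_def by simp
      have injZ: "inj_on (\<lambda>i. Z i div n) I"
      proof (rule inj_onI)
        have aux: False if "i \<in> I" "i' \<in> I" "i < i'" "Z i div n = Z i' div n" for i i'
        proof -
          have "Z i + (i' - i) * s0 \<le> Z i'" using Zmono that(3) by simp
          moreover have "1 * s0 \<le> (i' - i) * s0" using that(3) by (intro mult_le_mono1) simp
          ultimately have "Z i + s0 \<le> Z i'" by linarith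
          moreover have "Z i' = Z i div n * n + Z i' mod n" using that(4) by simp
          moreover have "Z i = Z i div n * n + Z i mod n" by simp
          moreover have "Z i' mod n < s0" using Zmod that(2) by simp
          ultimately show False using that(4) by linarith
        qed
        fix i i' assume "i \<in> I" "i' \<in> I" "Z i div n = Z i' div n"
        then show "i = i'" using aux[of i i'] aux[of i' i] by (metis linorder_neqE_nat)
      qed
      define i1 where "i1 = Min I"
      define i2 where "i2 = Max I"
      have i1I: "i1 \<in> I" and i2I: "i2 \<in> I" unfolding i1_def i2_def using finI neI by simp_all
      have i12: "i1 \<le> i" "i \<le> i2" if "i \<in> I" for i
        unfolding i1_def i2_def using finI that by simp_all
      have i2k: "i2 < k" using i2I unfolding I_def by simp
      have "(\<lambda>i. Z i div n) ` I \<subseteq> {Z i1 div n .. Z i2 div n}"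
      proof
        fix v assume "v \<in> (\<lambda>i. Z i div n) ` I"
        then obtain i where i: "i \<in> I" "v = Z i div n" by auto
        have "Z i1 \<le> Z i" using Zmono[OF i12(1)[OF i(1)]] by simp
        moreover have "Z i \<le> Z i2" using Zmono[OF i12(2)[OF i(1)]] by simp
        ultimately show "v \<in> {Z i1 div n .. Z i2 div n}" using i(2) by (simp add: div_le_mono)
      qed
      then have "card ((\<lambda>i. Z i div n) ` I) \<le> card {Z i1 div n .. Z i2 div n}"
        by (intro card_mono) simp_all
      then have "r + 1 \<le> Suc (Z i2 div n) - Z i1 div n"
        using card_image[OF injZ] cI by simp
      then have ab: "Z i1 div n + r \<le> Z i2 div n" by simp
      define a where "a = Z i1 div n"
      define b where "b = Z i2 div n"
      have "n * (a + r) \<le> n * b" using ab unfolding a_def b_def by (intro mult_le_mono2) simp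
      then have f1: "n * a + n * r \<le> n * b" by (simp add: add_mult_distrib2)
      have f2: "n * b \<le> Z i2" unfolding b_def by simp
      have f3: "Z i1 = n * a + Z i1 mod n" unfolding a_def by simp
      have f4: "Z i1 mod n < s0" by (rule Zmod[OF i1I])
      have i1i2: "i1 \<le> i2" using i12(2)[OF i1I] .
      have f5: "Z i2 \<le> Z i1 + (i2 - i1) * c + (G - 1)" by (rule Zup[OF i1i2])
      have "(i2 - i1) * c \<le> (k - 1) * c" using i2k by (intro mult_le_mono1) simp
      moreover have "(k - 1) * c + c = k * c" using k0 by (cases k) simp_all
      moreover have "s0 + 1 = c" unfolding s0_def using c1 by simp
      moreover have "n * r = r * n" by simp
      ultimately show False using f1 f2 f3 f4 f5 GA G0 by linarith
    qed
  qed
qed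

theorem theorem2:
  fixes n k r :: nat
  assumes "1 < r" and "r < k" and "k < n"
  shows "\<lfloor>(real r * real n - 1) / real k\<rfloor> - 1 \<le> int (sigma n k r)
       \<and> int (sigma n k r) \<le> \<lfloor>(real r * real n - 1) / real k\<rfloor>"
proof -
  note r1 = assms(1) and rk = assms(2) and kn = assms(3)
  define q where "q = (r * n - 1) div k"
  have k0: "0 < k" using r1 rk by simp
  have rn1: "1 \<le> r * n" using r1 rk kn by simp
  have "real r * real n - 1 = real (r * n - 1)" using rn1 by (simp add: of_nat_diff)
  then have fl: "\<lfloor>(real r * real n - 1) / real k\<rfloor> = int q"
    unfolding q_def by (simp only: floor_divide_of_nat_eq of_nat_nat)
  define Pr where "Pr s = (s \<le> n \<and> (\<exists>\<pi>. bij_betw \<pi> {..<n} {..<n} \<and> clash_free n \<pi> s k r))" for s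
  have sig: "sigma n k r = Greatest Pr" unfolding sigma_def Pr_def by simp
  have bnd: "\<And>y. Pr y \<Longrightarrow> y \<le> n" unfolding Pr_def by simp
  have "k * q \<le> r * n - 1" unfolding q_def by simp
  moreover have "r * n < k * n" using rk kn by simp
  ultimately have "k * q < k * n" by linarith
  then have qn: "q < n" by simp
  have Pq: "Pr (q - 1)" unfolding Pr_def q_def using lower[OF r1 rk kn] qn unfolding q_def by simp
  have low: "q - 1 \<le> sigma n k r" unfolding sig by (rule Greatest_le_nat[of Pr, OF Pq bnd])
  have "Pr (sigma n k r)" unfolding sig by (rule GreatestI_nat[of Pr, OF Pq bnd])
  then obtain \<pi> where "sigma n k r \<le> n" "bij_betw \<pi> {..<n} {..<n}" "clash_free n \<pi> (sigma n k r) k r"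
    unfolding Pr_def by blast
  then have "sigma n k r * k < r * n" using upper[OF r1 rk kn] by blast
  then have "sigma n k r * k \<le> r * n - 1" by simp
  then have up: "sigma n k r \<le> q" unfolding q_def using k0 by (simp add: less_eq_div_iff_mult_less_eq)
  show ?thesis unfolding fl using low up by linarith
qed

end
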